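(* Let $A,q,\mu$ be as in the context and write $k=k_0(A,q,\mu)$. (i) Let $\phi,\tilde\phi\in\mathcal{C}^2(\mathbb{R}^N)$ be positive periodic functions satisfying $-\nabla\cdot(A\nabla\phi)-q\cdot\nabla\phi-\mu\phi=k\phi$ and $-\nabla\cdot(A\nabla\tilde\phi)+q\cdot\nabla\tilde\phi-(\mu-\nabla\cdot q)\tilde\phi=k\tilde\phi$, with $\int_C\phi\tilde\phi=1$. Then $\alpha=\sqrt{\phi\tilde\phi}$ and $\beta=\frac12\ln(\phi/\tilde\phi)$ belong to $\mathcal{C}^2(\mathbb{R}^N)$ and satisfy \[-\nabla\cdot (A\nabla\alpha) - \Big(\mu-\frac{\nabla\cdot q}{2}+\nabla\beta A\nabla\beta+q\cdot \nabla\beta\Big)\alpha=k\alpha,\qquad -\nabla\cdot \Big( \alpha^2 \big(A\nabla\beta+\frac{q}{2}\big)\Big)=0,\] with $\alpha>0$ periodic and $\beta$ periodic. (ii) Conversely, if $(\alpha,\beta)\in\mathcal{C}^2(\mathbb{R}^N)\times\mathcal{C}^2(\mathbb{R}^N)$ satisfy the two equations in (i) with $\alpha>0$ periodic and $\beta$ periodic, then $\phi=\alpha e^{\beta}$ and $\tilde\phi=\alpha e^{-\beta}$ are positive periodic functions satisfying the two eigenvalue equations in (i).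
   Context: Let $(\epsilon_i)$ be an orthonormal basis of $\mathbb{R}^N$ and $L_1,\dots,L_N>0$; a function is periodic if it is invariant under $x\mapsto x+L_i\epsilon_i$ for every $i$; $C=\prod_{i=1}^N(0,L_i)$ is the periodicity cell. Let $A$ be a periodic, symmetric matrix field of class $\mathcal{C}^1$, uniformly elliptic ($\gamma|\xi|^2\le\xi A(x)\xi\le\Gamma|\xi|^2$ for some $0<\gamma\le\Gamma$). Let $q$ be a periodic $\mathcal{C}^1$ vector field and $\mu$ a continuous periodic function. $k_0(A,q,\mu)$ is the periodic principal eigenvalue of $\phi\mapsto-\nabla\cdot(A\nabla\phi)-q\cdot\nabla\phi-\mu\phi$, i.e. the unique real $k$ for which there exists a periodic $\phi\in\mathcal{C}^2(\mathbb{R}^N)$, $\phi>0$, with $-\nabla\cdot(A\nabla\phi)-q\cdot\nabla\phi-\mu\phi=k\phi$. *)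

theory Defs
  imports "HOL-Analysis.Analysis"
begin

text \<open>Points of R^N are vectors of type real^'n (N = CARD('n)).
  Partial derivative along the i-th standard coordinate direction.\<close>
definition partial :: "'n::finite \<Rightarrow> (real^'n \<Rightarrow> real) \<Rightarrow> real^'n \<Rightarrow> real" where
  "partial i f x = deriv (\<lambda>t. f (x + t *\<^sub>R axis i 1)) 0"

definition grad :: "(real^'n::finite \<Rightarrow> real) \<Rightarrow> real^'n \<Rightarrow> real^'n" where
  "grad f x = (\<chi> i. partial i f x)"

definition divg :: "(real^'n::finite \<Rightarrow> real^'n) \<Rightarrow> real^'n \<Rightarrow> real" where
  "divg F x = (\<Sum>i\<in>UNIV. partial i (\<lambda>y. F y $ i) x)"

definition C1 :: "(real^'n::finite \<Rightarrow> real) \<Rightarrow> bool" where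
  "C1 f \<longleftrightarrow> (\<forall>x. f differentiable (at x)) \<and> (\<forall>i. continuous_on UNIV (partial i f))"

definition C2 :: "(real^'n::finite \<Rightarrow> real) \<Rightarrow> bool" where
  "C2 f \<longleftrightarrow> C1 f \<and> (\<forall>i. C1 (partial i f))"

definition periodicf :: "('n::finite \<Rightarrow> real^'n) \<Rightarrow> ('n \<Rightarrow> real) \<Rightarrow> (real^'n \<Rightarrow> 'b) \<Rightarrow> bool" where
  "periodicf eps L f \<longleftrightarrow> (\<forall>x i. f (x + L i *\<^sub>R eps i) = f x)"

definition cell :: "('n::finite \<Rightarrow> real^'n) \<Rightarrow> ('n \<Rightarrow> real) \<Rightarrow> (real^'n) set" where
  "cell eps L = {x. \<forall>i. 0 < x \<bullet> eps i \<and> x \<bullet> eps i < L i}"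

definition Lop :: "(real^'n \<Rightarrow> real^'n^'n) \<Rightarrow> (real^'n \<Rightarrow> real^'n) \<Rightarrow> (real^'n \<Rightarrow> real)
    \<Rightarrow> (real^'n::finite \<Rightarrow> real) \<Rightarrow> real^'n \<Rightarrow> real" where
  "Lop A q \<mu> \<phi> x = - divg (\<lambda>y. A y *v grad \<phi> y) x - q x \<bullet> grad \<phi> x - \<mu> x * \<phi> x"

definition k0 :: "('n::finite \<Rightarrow> real^'n) \<Rightarrow> ('n \<Rightarrow> real) \<Rightarrow> (real^'n \<Rightarrow> real^'n^'n)
    \<Rightarrow> (real^'n \<Rightarrow> real^'n) \<Rightarrow> (real^'n \<Rightarrow> real) \<Rightarrow> real" where
  "k0 eps L A q \<mu> = (THE k. \<exists>\<phi>. C2 \<phi> \<and> periodicf eps L \<phi> \<and> (\<forall>x. \<phi> x > 0)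
      \<and> (\<forall>x. Lop A q \<mu> \<phi> x = k * \<phi> x))"

end

theory Submission
  imports Defs
begin

lemma line_deriv:
  assumes "f differentiable (at x)"
  shows "((\<lambda>t. f (x + t *\<^sub>R axis i 1)) has_real_derivative partial i f x) (at 0)"
proof -
  from assms obtain f' where f': "(f has_derivative f') (at x)" by (auto simp: differentiable_def)
  have lin: "bounded_linear f'" using f' by (rule has_derivative_bounded_linear)
  have "(f has_derivative f') (at (x + 0 *\<^sub>R axis i 1))" using f' by simp
  moreover have "((\<lambda>t. x + t *\<^sub>R axis i 1) has_derivative (\<lambda>t. t *\<^sub>R axis i 1)) (at 0)"
    by (auto intro!: derivative_eq_intros)
  ultimately have "((\<lambda>t. f (x + t *\<^sub>R axis i 1)) has_derivative (\<lambda>t. f' (t *\<^sub>R axis i 1))) (at 0)"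
    using has_derivative_compose by blast
  moreover have "(\<lambda>t. f' (t *\<^sub>R axis i 1)) = (*) (f' (axis i 1))"
    using lin by (auto simp: fun_eq_iff linear_simps)
  ultimately have d: "((\<lambda>t. f (x + t *\<^sub>R axis i 1)) has_real_derivative f' (axis i 1)) (at 0)"
    by (simp add: has_field_derivative_def)
  then have "partial i f x = f' (axis i 1)" unfolding partial_def by (rule DERIV_imp_deriv)
  with d show ?thesis by simp
qed

lemma partial_eqI:
  assumes "((\<lambda>t. f (x + t *\<^sub>R axis i 1)) has_real_derivative d) (at 0)"
  shows "partial i f x = d"
  using assms unfolding partial_def by (rule DERIV_imp_deriv)

lemma partial_mult:
  assumes "f differentiable (at x)" "g differentiable (at x)"
  shows "partial i (\<lambda>y. f y * g y) x = partial i f x * g x + f x * partial i g x"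
  apply (rule partial_eqI)
  using DERIV_mult[OF line_deriv[OF assms(1)] line_deriv[OF assms(2)], of i i] by (simp add: mult.commute)

lemma partial_add:
  assumes "f differentiable (at x)" "g differentiable (at x)"
  shows "partial i (\<lambda>y. f y + g y) x = partial i f x + partial i g x"
  apply (rule partial_eqI)
  using DERIV_add[OF line_deriv[OF assms(1)] line_deriv[OF assms(2)], of i i] by simp

lemma partial_diff:
  assumes "f differentiable (at x)" "g differentiable (at x)"
  shows "partial i (\<lambda>y. f y - g y) x = partial i f x - partial i g x"
  apply (rule partial_eqI)
  using DERIV_diff[OF line_deriv[OF assms(1)] line_deriv[OF assms(2)], of i i] by simp

lemma partial_sum:
  assumes "finite S" "\<And>j. j \<in> S \<Longrightarrow> f j differentiable (at x)"
  shows "partial i (\<lambda>y. \<Sum>j\<in>S. f j y) x = (\<Sum>j\<in>S. partial i (f j) x)"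
  apply (rule partial_eqI)
  using DERIV_sum[of S "\<lambda>t j. f j (x + t *\<^sub>R axis i 1)" "\<lambda>j. partial i (f j) x" "at 0"]
    line_deriv[OF assms(2)] by simp

lemma partial_comp:
  assumes "f differentiable (at x)" "(h has_real_derivative h') (at (f x))"
  shows "partial i (\<lambda>y. h (f y)) x = h' * partial i f x"
proof (rule partial_eqI)
  have "(h has_real_derivative h') (at (f (x + 0 *\<^sub>R axis i 1)))" using assms(2) by simp
  from DERIV_chain2[OF this line_deriv[OF assms(1)]]
  show "((\<lambda>t. h (f (x + t *\<^sub>R axis i 1))) has_real_derivative h' * partial i f x) (at 0)" .
qed

lemma partial_const: "partial i (\<lambda>y. c) x = 0"
  by (rule partial_eqI) simp


lemma C1_diffb: "C1 f \<Longrightarrow> f differentiable (at x)" by (simp add: C1_def)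
lemma C1_cont: "C1 f \<Longrightarrow> continuous_on UNIV f"
  by (metis C1_def continuous_at_imp_continuous_on differentiable_imp_continuous_within)
lemma C1_pcont: "C1 f \<Longrightarrow> continuous_on UNIV (partial i f)" by (simp add: C1_def)

lemma C1_mult: assumes "C1 f" "C1 g" shows "C1 (\<lambda>y. f y * g y)"
proof -
  have e: "partial i (\<lambda>y. f y * g y) = (\<lambda>y. partial i f y * g y + f y * partial i g y)" for i
    using partial_mult[OF C1_diffb[OF assms(1)] C1_diffb[OF assms(2)]] by auto
  show ?thesis unfolding C1_def e
    using assms by (auto intro!: differentiable_mult continuous_intros simp: C1_diffb C1_cont C1_pcont)
qed

lemma C1_add: assumes "C1 f" "C1 g" shows "C1 (\<lambda>y. f y + g y)"
proof -
  have e: "partial i (\<lambda>y. f y + g y) = (\<lambda>y. partial i f y + partial i g y)" for i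
    using partial_add[OF C1_diffb[OF assms(1)] C1_diffb[OF assms(2)]] by auto
  show ?thesis unfolding C1_def e
    using assms by (auto intro!: differentiable_add continuous_intros simp: C1_diffb C1_cont C1_pcont)
qed

lemma C1_diff: assumes "C1 f" "C1 g" shows "C1 (\<lambda>y. f y - g y)"
proof -
  have e: "partial i (\<lambda>y. f y - g y) = (\<lambda>y. partial i f y - partial i g y)" for i
    using partial_diff[OF C1_diffb[OF assms(1)] C1_diffb[OF assms(2)]] by auto
  show ?thesis unfolding C1_def e
    using assms by (auto intro!: differentiable_diff continuous_intros simp: C1_diffb C1_cont C1_pcont)
qed

lemma C1_const: "C1 (\<lambda>y. c)"
  unfolding C1_def partial_const by auto

lemma C1_comp:
  assumes f: "C1 f" and S: "\<And>x. f x \<in> S" and h: "\<And>z. z \<in> S \<Longrightarrow> (h has_real_derivative h' z) (at z)"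
    and h': "continuous_on S h'"
  shows "C1 (\<lambda>y. h (f y))"
proof -
  have e: "partial i (\<lambda>y. h (f y)) = (\<lambda>y. h' (f y) * partial i f y)" for i
    using partial_comp[OF C1_diffb[OF f] h[OF S]] by auto
  have d: "(\<lambda>y. h (f y)) differentiable (at x)" for x
  proof -
    have "h differentiable (at (f x))"
      using h[OF S] by (metis differentiableI has_field_derivative_imp_has_derivative)
    from differentiable_chain_at[OF C1_diffb[OF f] this] show ?thesis by (simp add: o_def)
  qed
  have c: "continuous_on UNIV (\<lambda>y. h' (f y))"
    using continuous_on_compose2[OF h' C1_cont[OF f]] S by auto
  show ?thesis unfolding C1_def e
    using d c f by (auto intro!: continuous_intros simp: C1_pcont)
qed

lemma C2_C1: "C2 f \<Longrightarrow> C1 f" by (simp add: C2_def)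
lemma C2_p: "C2 f \<Longrightarrow> C1 (partial i f)" by (simp add: C2_def)
lemma C2_diffb: "C2 f \<Longrightarrow> f differentiable (at x)" by (simp add: C2_def C1_def)
lemma C2_pdiffb: "C2 f \<Longrightarrow> partial i f differentiable (at x)" by (simp add: C2_def C1_def)

lemma C2_mult: assumes "C2 f" "C2 g" shows "C2 (\<lambda>y. f y * g y)"
proof -
  have e: "partial i (\<lambda>y. f y * g y) = (\<lambda>y. partial i f y * g y + f y * partial i g y)" for i
    using partial_mult[OF C2_diffb[OF assms(1)] C2_diffb[OF assms(2)]] by auto
  show ?thesis unfolding C2_def e
    using assms by (auto intro!: C1_mult C1_add simp: C2_C1 C2_p)
qed

lemma C2_add: assumes "C2 f" "C2 g" shows "C2 (\<lambda>y. f y + g y)"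
proof -
  have e: "partial i (\<lambda>y. f y + g y) = (\<lambda>y. partial i f y + partial i g y)" for i
    using partial_add[OF C2_diffb[OF assms(1)] C2_diffb[OF assms(2)]] by auto
  show ?thesis unfolding C2_def e
    using assms by (auto intro!: C1_add simp: C2_C1 C2_p)
qed

lemma C2_diff: assumes "C2 f" "C2 g" shows "C2 (\<lambda>y. f y - g y)"
proof -
  have e: "partial i (\<lambda>y. f y - g y) = (\<lambda>y. partial i f y - partial i g y)" for i
    using partial_diff[OF C2_diffb[OF assms(1)] C2_diffb[OF assms(2)]] by auto
  show ?thesis unfolding C2_def e
    using assms by (auto intro!: C1_diff simp: C2_C1 C2_p)
qed

lemma C2_const: "C2 (\<lambda>y. c)"
  unfolding C2_def partial_const by (auto intro!: C1_const)

lemma C2_comp: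
  assumes f: "C2 f" and S: "\<And>x. f x \<in> S" and h: "\<And>z. z \<in> S \<Longrightarrow> (h has_real_derivative h' z) (at z)"
    and h': "\<And>z. z \<in> S \<Longrightarrow> (h' has_real_derivative h'' z) (at z)"
    and h'': "continuous_on S h''"
  shows "C2 (\<lambda>y. h (f y))"
proof -
  have c': "continuous_on S h'"
    using h' by (meson DERIV_isCont continuous_at_imp_continuous_on)
  have e: "partial i (\<lambda>y. h (f y)) = (\<lambda>y. h' (f y) * partial i f y)" for i
    using partial_comp[OF C2_diffb[OF f] h[OF S]] by auto
  show ?thesis unfolding C2_def e
    by (auto intro!: C1_mult C1_comp[OF C2_C1[OF f] S h c'] C1_comp[OF C2_C1[OF f] S h' h''] C2_p f)
qed


lemma grad_component[simp]: "grad f x $ i = partial i f x" by (simp add: grad_def)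

lemma divg_add: assumes "\<And>i. (\<lambda>y. V y $ i) differentiable (at x)" "\<And>i. (\<lambda>y. W y $ i) differentiable (at x)"
  shows "divg (\<lambda>y. V y + W y) x = divg V x + divg W x"
  unfolding divg_def by (simp add: partial_add assms sum.distrib)

lemma divg_scale: assumes "c differentiable (at x)" "\<And>i. (\<lambda>y. V y $ i) differentiable (at x)"
  shows "divg (\<lambda>y. c y *\<^sub>R V y) x = c x * divg V x + grad c x \<bullet> V x"
  unfolding divg_def inner_vec_def by (simp add: partial_mult assms sum.distrib sum_distrib_left)

lemma sym_inner: fixes M :: "real^'n::finite^'n" assumes "transpose M = M" shows "u \<bullet> (M *v w) = w \<bullet> (M *v u)"
proof -
  have "u \<bullet> (M *v w) = (u v* M) \<bullet> w" by (rule dot_lmul_matrix[symmetric])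
  also have "\<dots> = (transpose M *v u) \<bullet> w" by (simp add: transpose_matrix_vector)
  finally show ?thesis using assms by (simp add: inner_commute)
qed

lemma Av_diff: assumes "\<And>i j. C1 (\<lambda>x. A x $ i $ j)" "C2 f"
  shows "(\<lambda>y. (A y *v grad f y) $ i) differentiable (at x)"
  unfolding matrix_vector_mult_def using assms
  by (auto intro!: differentiable_sum differentiable_mult simp: C1_diffb C2_pdiffb)


lemma core:
  fixes a b :: "real^'n::finite \<Rightarrow> real" and A :: "real^'n \<Rightarrow> real^'n^'n" and q :: "real^'n \<Rightarrow> real^'n"
    and \<mu> :: "real^'n \<Rightarrow> real" and k :: real
  assumes a: "C2 a" and b: "C2 b" and apos: "a x \<noteq> 0"
    and Asym: "\<And>x. transpose (A x) = A x" and AC1: "\<And>i j. C1 (\<lambda>x. A x $ i $ j)"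
    and qC1: "\<And>i. C1 (\<lambda>x. q x $ i)"
  defines "G1 \<equiv> - divg (\<lambda>y. A y *v grad a y) x
                  - (\<mu> x - divg q x / 2 + grad b x \<bullet> (A x *v grad b x) + q x \<bullet> grad b x) * a x - k * a x"
    and "G2 \<equiv> - divg (\<lambda>y. (a y)\<^sup>2 *\<^sub>R (A y *v grad b y + (1/2) *\<^sub>R q y)) x"
  shows "- divg (\<lambda>y. A y *v grad (\<lambda>z. a z * exp (b z)) y) x - q x \<bullet> grad (\<lambda>z. a z * exp (b z)) x
           - \<mu> x * (a x * exp (b x)) - k * (a x * exp (b x)) = exp (b x) * (G1 + G2 / a x)"
proof -
  define Aa where "Aa = (\<lambda>y. A y *v grad a y)"
  define Ab where "Ab = (\<lambda>y. A y *v grad b y)"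
  have da: "\<And>y. a differentiable (at y)" using a by (simp add: C2_diffb)
  have db: "\<And>y. b differentiable (at y)" using b by (simp add: C2_diffb)
  have Ce: "C2 (\<lambda>y. exp (b y))"
    by (rule C2_comp[OF b, of UNIV exp exp exp]) (auto intro: DERIV_exp continuous_on_exp continuous_on_id)
  have de: "\<And>y. (\<lambda>y. exp (b y)) differentiable (at y)" using Ce by (simp add: C2_diffb)
  have pe: "\<And>j y. partial j (\<lambda>y. exp (b y)) y = exp (b y) * partial j b y"
    by (rule partial_comp[OF db DERIV_exp])
  have ge: "grad (\<lambda>y. exp (b y)) x = exp (b x) *\<^sub>R grad b x"
    by (simp add: vec_eq_iff pe)
  have gphi: "\<And>y. grad (\<lambda>z. a z * exp (b z)) y = exp (b y) *\<^sub>R (grad a y + a y *\<^sub>R grad b y)"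
    by (simp add: vec_eq_iff partial_mult[OF da de] pe algebra_simps)
  have Aphi: "(\<lambda>y. A y *v grad (\<lambda>z. a z * exp (b z)) y) = (\<lambda>y. exp (b y) *\<^sub>R (Aa y + a y *\<^sub>R Ab y))"
    by (simp add: gphi Aa_def Ab_def matrix_vector_mult_scaleR matrix_vector_right_distrib)
  have dAa: "\<And>i. (\<lambda>y. Aa y $ i) differentiable (at x)" unfolding Aa_def by (rule Av_diff[OF AC1 a])
  have dAb: "\<And>i. (\<lambda>y. Ab y $ i) differentiable (at x)" unfolding Ab_def by (rule Av_diff[OF AC1 b])
  have dq: "\<And>i. (\<lambda>y. q y $ i) differentiable (at x)" using qC1 by (simp add: C1_diffb)
  have daAb: "\<And>i. (\<lambda>y. (a y *\<^sub>R Ab y) $ i) differentiable (at x)"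
    using dAb da by (auto intro!: differentiable_mult)
  have dV: "\<And>i. (\<lambda>y. (Aa y + a y *\<^sub>R Ab y) $ i) differentiable (at x)"
    using dAa daAb by (auto intro!: differentiable_add)
  have divV: "divg (\<lambda>y. Aa y + a y *\<^sub>R Ab y) x = divg Aa x + (a x * divg Ab x + grad a x \<bullet> Ab x)"
    by (simp add: divg_add[OF dAa daAb] divg_scale[OF da dAb])
  have div1: "divg (\<lambda>y. A y *v grad (\<lambda>z. a z * exp (b z)) y) x
      = exp (b x) * (divg Aa x + (a x * divg Ab x + grad a x \<bullet> Ab x)) + (exp (b x) *\<^sub>R grad b x) \<bullet> (Aa x + a x *\<^sub>R Ab x)"
    unfolding Aphi divg_scale[OF de dV] divV ge ..
  have dhq: "\<And>i. (\<lambda>y. ((1/2) *\<^sub>R q y) $ i) differentiable (at x)"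
    using dq by (auto intro!: differentiable_mult)
  have dW: "\<And>i. (\<lambda>y. (Ab y + (1/2) *\<^sub>R q y) $ i) differentiable (at x)"
    using dAb dhq by (auto intro!: differentiable_add)
  have da2: "(\<lambda>y. (a y)\<^sup>2) differentiable (at x)" using da by (auto intro!: differentiable_power)
  have pa2: "\<And>j. partial j (\<lambda>y. (a y)\<^sup>2) x = 2 * a x * partial j a x"
  proof -
    fix j
    have "((\<lambda>t. t\<^sup>2) has_real_derivative 2 * a x) (at (a x))"
      by (auto intro!: derivative_eq_intros)
    from partial_comp[OF da this] show "partial j (\<lambda>y. (a y)\<^sup>2) x = 2 * a x * partial j a x" .
  qed
  have ga2: "grad (\<lambda>y. (a y)\<^sup>2) x = (2 * a x) *\<^sub>R grad a x" by (simp add: vec_eq_iff pa2)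
  have dc: "(\<lambda>y. 1/2 :: real) differentiable (at x)" by simp
  have gc: "grad (\<lambda>y. 1/2 :: real) x = 0" by (simp add: vec_eq_iff partial_const)
  have divW: "divg (\<lambda>y. Ab y + (1/2) *\<^sub>R q y) x = divg Ab x + (1/2) * divg q x"
    using divg_add[OF dAb dhq] divg_scale[OF dc dq] gc by simp
  have div2: "divg (\<lambda>y. (a y)\<^sup>2 *\<^sub>R (A y *v grad b y + (1/2) *\<^sub>R q y)) x
      = (a x)\<^sup>2 * (divg Ab x + (1/2) * divg q x) + ((2 * a x) *\<^sub>R grad a x) \<bullet> (Ab x + (1/2) *\<^sub>R q x)"
    using divg_scale[OF da2 dW] divW ga2 unfolding Ab_def by simp
  have sym: "grad b x \<bullet> Aa x = grad a x \<bullet> Ab x" unfolding Aa_def Ab_def by (rule sym_inner[OF Asym])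
  have Abx: "A x *v grad b x = Ab x" by (simp add: Ab_def)
  have qc: "grad a x \<bullet> q x = q x \<bullet> grad a x" by (rule inner_commute)
  show ?thesis
    unfolding G1_def G2_def unfolding div1 div2 gphi[of x]
    unfolding Aa_def[symmetric] Ab_def[symmetric]
    using apos Abx
    by (simp add: inner_add_left inner_add_right sym qc field_simps power2_eq_square)
qed


lemma partial_neg: assumes "f differentiable (at x)" shows "partial i (\<lambda>y. - f y) x = - partial i f x"
  apply (rule partial_eqI)
  using DERIV_minus[OF line_deriv[OF assms]] by simp

lemma divg_neg: assumes "\<And>i. (\<lambda>y. V y $ i) differentiable (at x)"
  shows "divg (\<lambda>y. - V y) x = - divg V x"
  unfolding divg_def by (simp add: partial_neg assms sum_negf)

lemma core2:
  fixes a b :: "real^'n::finite \<Rightarrow> real" and A :: "real^'n \<Rightarrow> real^'n^'n" and q :: "real^'n \<Rightarrow> real^'n"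
    and \<mu> :: "real^'n \<Rightarrow> real" and k :: real
  assumes a: "C2 a" and b: "C2 b" and apos: "a x \<noteq> 0"
    and Asym: "\<And>x. transpose (A x) = A x" and AC1: "\<And>i j. C1 (\<lambda>x. A x $ i $ j)"
    and qC1: "\<And>i. C1 (\<lambda>x. q x $ i)"
  defines "G1 \<equiv> - divg (\<lambda>y. A y *v grad a y) x
                  - (\<mu> x - divg q x / 2 + grad b x \<bullet> (A x *v grad b x) + q x \<bullet> grad b x) * a x - k * a x"
    and "G2 \<equiv> - divg (\<lambda>y. (a y)\<^sup>2 *\<^sub>R (A y *v grad b y + (1/2) *\<^sub>R q y)) x"
  shows "- divg (\<lambda>y. A y *v grad (\<lambda>z. a z * exp (- b z)) y) x + q x \<bullet> grad (\<lambda>z. a z * exp (- b z)) x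
           - (\<mu> x - divg q x) * (a x * exp (- b x)) - k * (a x * exp (- b x)) = exp (- b x) * (G1 - G2 / a x)"
proof -
  have b': "C2 (\<lambda>y. - b y)" using C2_diff[OF C2_const b, of 0] by simp
  have q': "\<And>i. C1 (\<lambda>x. (- q x) $ i)" using C1_diff[OF C1_const qC1, of 0] by simp
  have db: "\<And>y. b differentiable (at y)" using b by (simp add: C2_diffb)
  have dq: "\<And>i. (\<lambda>y. q y $ i) differentiable (at x)" using qC1 by (simp add: C1_diffb)
  have gb: "\<And>y. grad (\<lambda>y. - b y) y = - grad b y" by (simp add: vec_eq_iff partial_neg[OF db])
  have dvq: "divg (\<lambda>y. - q y) x = - divg q x" by (rule divg_neg[OF dq])
  define W where "W = (\<lambda>y. (a y)\<^sup>2 *\<^sub>R (A y *v grad b y + (1/2) *\<^sub>R q y))"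
  have dW: "\<And>i. (\<lambda>y. W y $ i) differentiable (at x)"
  proof -
    fix i
    have "(\<lambda>y. (A y *v grad b y) $ i) differentiable (at x)" by (rule Av_diff[OF AC1 b])
    then show "(\<lambda>y. W y $ i) differentiable (at x)"
      unfolding W_def using a dq by (auto intro!: differentiable_mult differentiable_add differentiable_power simp: C2_diffb)
  qed
  have Weq: "(\<lambda>y. (a y)\<^sup>2 *\<^sub>R (A y *v grad (\<lambda>y. - b y) y + (1/2) *\<^sub>R (- q y))) = (\<lambda>y. - W y)"
    by (simp add: W_def gb vec.neg algebra_simps)
  have G2W: "G2 = - divg W x" unfolding G2_def W_def ..
  have c: "- divg (\<lambda>y. A y *v grad (\<lambda>z. a z * exp (- b z)) y) x - (- q x) \<bullet> grad (\<lambda>z. a z * exp (- b z)) x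
           - (\<mu> x - divg q x) * (a x * exp (- b x)) - k * (a x * exp (- b x)) =
    exp (- b x) * ((- divg (\<lambda>y. A y *v grad a y) x
                  - ((\<mu> x - divg q x) - divg (\<lambda>y. - q y) x / 2 + grad (\<lambda>y. - b y) x \<bullet> (A x *v grad (\<lambda>y. - b y) x) + (- q x) \<bullet> grad (\<lambda>y. - b y) x) * a x - k * a x)
     + (- divg (\<lambda>y. (a y)\<^sup>2 *\<^sub>R (A y *v grad (\<lambda>y. - b y) y + (1/2) *\<^sub>R (- q y))) x) / a x)"
    by (rule core[OF a b' apos Asym AC1 q'])
  show ?thesis
    using c unfolding Weq unfolding divg_neg[OF dW] G2W G1_def gb dvq
    by (simp add: algebra_simps vec.neg)
qed


lemma alg: fixes E1 E2 a g1 g2 X1 X2 k1 k2 :: real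
  assumes "E1 > 0" "E2 > 0" "a \<noteq> 0" "X1 - k1 = E1*(g1 + g2/a)" "X2 - k2 = E2*(g1 - g2/a)"
  shows "(X1 = k1 \<and> X2 = k2) \<longleftrightarrow> (g1 = 0 \<and> g2 = 0)"
proof
  assume "X1 = k1 \<and> X2 = k2"
  then have "g1 + g2/a = 0" "g1 - g2/a = 0" using assms by auto
  then have "g1 = 0" "g2/a = 0" by linarith+
  then show "g1 = 0 \<and> g2 = 0" using assms(3) by simp
next
  assume "g1 = 0 \<and> g2 = 0"
  then show "X1 = k1 \<and> X2 = k2" using assms by simp
qed

lemma pt:
  fixes a b :: "real^'n::finite \<Rightarrow> real" and A :: "real^'n \<Rightarrow> real^'n^'n" and q :: "real^'n \<Rightarrow> real^'n"
    and \<mu> :: "real^'n \<Rightarrow> real" and k :: real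
  assumes a: "C2 a" and b: "C2 b" and apos: "a x > 0"
    and Asym: "\<And>x. transpose (A x) = A x" and AC1: "\<And>i j. C1 (\<lambda>x. A x $ i $ j)"
    and qC1: "\<And>i. C1 (\<lambda>x. q x $ i)"
  shows "((- divg (\<lambda>y. A y *v grad (\<lambda>z. a z * exp (b z)) y) x - q x \<bullet> grad (\<lambda>z. a z * exp (b z)) x
              - \<mu> x * (a x * exp (b x)) = k * (a x * exp (b x)))
        \<and> (- divg (\<lambda>y. A y *v grad (\<lambda>z. a z * exp (- b z)) y) x + q x \<bullet> grad (\<lambda>z. a z * exp (- b z)) x
              - (\<mu> x - divg q x) * (a x * exp (- b x)) = k * (a x * exp (- b x))))
   \<longleftrightarrow> ((- divg (\<lambda>y. A y *v grad a y) x
              - (\<mu> x - divg q x / 2 + grad b x \<bullet> (A x *v grad b x) + q x \<bullet> grad b x) * a x = k * a x)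
        \<and> (- divg (\<lambda>y. (a y)\<^sup>2 *\<^sub>R (A y *v grad b y + (1/2) *\<^sub>R q y)) x = 0))"
proof -
  have apos': "a x \<noteq> 0" using apos by simp
  note c1 = core[OF a b apos' Asym AC1 qC1, of \<mu> k]
  note c2 = core2[OF a b apos' Asym AC1 qC1, of \<mu> k]
  show ?thesis using alg[OF exp_gt_zero exp_gt_zero apos' c1 c2] by simp
qed


lemma C2_exp: "C2 f \<Longrightarrow> C2 (\<lambda>x. exp (f x))"
  by (rule C2_comp[of f UNIV exp exp exp]) (auto intro: DERIV_exp continuous_on_exp continuous_on_id)

lemma C2_ln: assumes "C2 f" "\<And>x. f x > 0" shows "C2 (\<lambda>x. ln (f x))"
proof (rule C2_comp[of f "{0<..}" ln "\<lambda>z. 1/z" "\<lambda>z. - 1 / z^2"])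
  show "\<And>z. z \<in> {0<..} \<Longrightarrow> (ln has_real_derivative 1 / z) (at z)" by (auto intro: DERIV_ln_divide)
  show "\<And>z. z \<in> {0<..} \<Longrightarrow> ((\<lambda>z. 1 / z) has_real_derivative - 1 / z\<^sup>2) (at z)"
    by (auto intro!: derivative_eq_intros simp: power2_eq_square field_simps)
  show "continuous_on {0<..} (\<lambda>z::real. - 1 / z\<^sup>2)" by (auto intro!: continuous_intros)
qed (use assms in auto)

lemma C2_half: "C2 f \<Longrightarrow> C2 (\<lambda>x. f x / 2)"
  using C2_mult[OF _ C2_const[of "1/2"], of f] by simp

lemma C2_neg: "C2 f \<Longrightarrow> C2 (\<lambda>x. - f x)"
  using C2_diff[OF C2_const, of f 0] by simp

lemma sqrt_exp: "0 < y \<Longrightarrow> sqrt y = exp (ln y / 2)"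
proof -
  assume y: "0 < y"
  have "(exp (ln y / 2))\<^sup>2 = y" using y by (simp add: power2_eq_square flip: exp_add)
  then show ?thesis by (intro real_sqrt_unique) auto
qed

theorem proposition2p6:
  fixes eps :: "'n::finite \<Rightarrow> real^'n" and L :: "'n \<Rightarrow> real"
    and A :: "real^'n \<Rightarrow> real^'n^'n" and q :: "real^'n \<Rightarrow> real^'n" and \<mu> :: "real^'n \<Rightarrow> real"
    and \<gamma> \<Gamma> k :: real
  assumes orth: "\<And>i j. eps i \<bullet> eps j = (if i = j then 1 else 0)"
    and Lpos: "\<And>i. L i > 0"
    and A_per: "periodicf eps L A"
    and A_sym: "\<And>x. transpose (A x) = A x"
    and A_C1: "\<And>i j. C1 (\<lambda>x. A x $ i $ j)"
    and ell: "0 < \<gamma>" "\<gamma> \<le> \<Gamma>"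
    and A_ell: "\<And>x \<xi>. \<gamma> * norm \<xi> ^ 2 \<le> \<xi> \<bullet> (A x *v \<xi>) \<and> \<xi> \<bullet> (A x *v \<xi>) \<le> \<Gamma> * norm \<xi> ^ 2"
    and q_per: "periodicf eps L q"
    and q_C1: "\<And>i. C1 (\<lambda>x. q x $ i)"
    and mu_per: "periodicf eps L \<mu>"
    and mu_cont: "continuous_on UNIV \<mu>"
    and k_def: "k = k0 eps L A q \<mu>"
  shows
   "(\<forall>\<phi> \<psi>. C2 \<phi> \<and> C2 \<psi> \<and> (\<forall>x. \<phi> x > 0) \<and> (\<forall>x. \<psi> x > 0)
        \<and> periodicf eps L \<phi> \<and> periodicf eps L \<psi>
        \<and> (\<forall>x. - divg (\<lambda>y. A y *v grad \<phi> y) x - q x \<bullet> grad \<phi> x - \<mu> x * \<phi> x = k * \<phi> x)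
        \<and> (\<forall>x. - divg (\<lambda>y. A y *v grad \<psi> y) x + q x \<bullet> grad \<psi> x - (\<mu> x - divg q x) * \<psi> x = k * \<psi> x)
        \<and> integral (cell eps L) (\<lambda>x. \<phi> x * \<psi> x) = 1
      \<longrightarrow> (let \<alpha> = (\<lambda>x. sqrt (\<phi> x * \<psi> x)); \<beta> = (\<lambda>x. ln (\<phi> x / \<psi> x) / 2) in
            C2 \<alpha> \<and> C2 \<beta>
          \<and> (\<forall>x. - divg (\<lambda>y. A y *v grad \<alpha> y) x
                  - (\<mu> x - divg q x / 2 + grad \<beta> x \<bullet> (A x *v grad \<beta> x) + q x \<bullet> grad \<beta> x) * \<alpha> x
                 = k * \<alpha> x)
          \<and> (\<forall>x. - divg (\<lambda>y. (\<alpha> y)\<^sup>2 *\<^sub>R (A y *v grad \<beta> y + (1/2) *\<^sub>R q y)) x = 0)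
          \<and> (\<forall>x. \<alpha> x > 0) \<and> periodicf eps L \<alpha> \<and> periodicf eps L \<beta>))
  \<and> (\<forall>\<alpha> \<beta>. C2 \<alpha> \<and> C2 \<beta> \<and> (\<forall>x. \<alpha> x > 0) \<and> periodicf eps L \<alpha> \<and> periodicf eps L \<beta>
          \<and> (\<forall>x. - divg (\<lambda>y. A y *v grad \<alpha> y) x
                  - (\<mu> x - divg q x / 2 + grad \<beta> x \<bullet> (A x *v grad \<beta> x) + q x \<bullet> grad \<beta> x) * \<alpha> x
                 = k * \<alpha> x)
          \<and> (\<forall>x. - divg (\<lambda>y. (\<alpha> y)\<^sup>2 *\<^sub>R (A y *v grad \<beta> y + (1/2) *\<^sub>R q y)) x = 0)
      \<longrightarrow> (let \<phi> = (\<lambda>x. \<alpha> x * exp (\<beta> x)); \<psi> = (\<lambda>x. \<alpha> x * exp (- \<beta> x)) in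
            C2 \<phi> \<and> C2 \<psi> \<and> (\<forall>x. \<phi> x > 0) \<and> (\<forall>x. \<psi> x > 0)
          \<and> periodicf eps L \<phi> \<and> periodicf eps L \<psi>
          \<and> (\<forall>x. - divg (\<lambda>y. A y *v grad \<phi> y) x - q x \<bullet> grad \<phi> x - \<mu> x * \<phi> x = k * \<phi> x)
          \<and> (\<forall>x. - divg (\<lambda>y. A y *v grad \<psi> y) x + q x \<bullet> grad \<psi> x - (\<mu> x - divg q x) * \<psi> x = k * \<psi> x)))"
proof (intro conjI allI impI)
  fix \<phi> \<psi> :: "real^'n \<Rightarrow> real"
  assume H: "C2 \<phi> \<and> C2 \<psi> \<and> (\<forall>x. \<phi> x > 0) \<and> (\<forall>x. \<psi> x > 0)
        \<and> periodicf eps L \<phi> \<and> periodicf eps L \<psi>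
        \<and> (\<forall>x. - divg (\<lambda>y. A y *v grad \<phi> y) x - q x \<bullet> grad \<phi> x - \<mu> x * \<phi> x = k * \<phi> x)
        \<and> (\<forall>x. - divg (\<lambda>y. A y *v grad \<psi> y) x + q x \<bullet> grad \<psi> x - (\<mu> x - divg q x) * \<psi> x = k * \<psi> x)
        \<and> integral (cell eps L) (\<lambda>x. \<phi> x * \<psi> x) = 1"
  then have C\<phi>: "C2 \<phi>" and C\<psi>: "C2 \<psi>" and p\<phi>: "\<And>x. \<phi> x > 0" and p\<psi>: "\<And>x. \<psi> x > 0"
    and per\<phi>: "periodicf eps L \<phi>" and per\<psi>: "periodicf eps L \<psi>"
    and E1: "\<forall>x. - divg (\<lambda>y. A y *v grad \<phi> y) x - q x \<bullet> grad \<phi> x - \<mu> x * \<phi> x = k * \<phi> x"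
    and E2: "\<forall>x. - divg (\<lambda>y. A y *v grad \<psi> y) x + q x \<bullet> grad \<psi> x - (\<mu> x - divg q x) * \<psi> x = k * \<psi> x"
    by auto
  define a where "a = (\<lambda>x. sqrt (\<phi> x * \<psi> x))"
  define b where "b = (\<lambda>x. ln (\<phi> x / \<psi> x) / 2)"
  have aexp: "a = (\<lambda>x. exp ((ln (\<phi> x) + ln (\<psi> x)) / 2))"
  proof
    fix x
    have "0 < \<phi> x * \<psi> x" using p\<phi>[of x] p\<psi>[of x] by simp
    then show "a x = exp ((ln (\<phi> x) + ln (\<psi> x)) / 2)"
      unfolding a_def using p\<phi>[of x] p\<psi>[of x] by (simp add: sqrt_exp ln_mult)
  qed
  have bln: "b = (\<lambda>x. (ln (\<phi> x) - ln (\<psi> x)) / 2)"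
  proof
    fix x
    show "b x = (ln (\<phi> x) - ln (\<psi> x)) / 2"
      unfolding b_def using p\<phi>[of x] p\<psi>[of x] by (simp add: ln_div)
  qed
  have Ca: "C2 a" unfolding aexp
    by (intro C2_exp C2_half C2_add C2_ln C\<phi> C\<psi> p\<phi> p\<psi>)
  have Cb: "C2 b" unfolding bln
    by (intro C2_half C2_diff C2_ln C\<phi> C\<psi> p\<phi> p\<psi>)
  have apos: "\<And>x. a x > 0" unfolding aexp by simp
  have \<phi>eq: "\<phi> = (\<lambda>z. a z * exp (b z))"
  proof
    fix x
    have "(ln (\<phi> x) + ln (\<psi> x)) / 2 + (ln (\<phi> x) - ln (\<psi> x)) / 2 = ln (\<phi> x)" by (simp add: field_simps)
    then show "\<phi> x = a x * exp (b x)" unfolding aexp bln using p\<phi>[of x] by (simp flip: exp_add)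
  qed
  have \<psi>eq: "\<psi> = (\<lambda>z. a z * exp (- b z))"
  proof
    fix x
    have "(ln (\<phi> x) + ln (\<psi> x)) / 2 + - ((ln (\<phi> x) - ln (\<psi> x)) / 2) = ln (\<psi> x)" by (simp add: field_simps)
    then show "\<psi> x = a x * exp (- b x)" unfolding aexp bln using p\<psi>[of x] by (simp flip: exp_add)
  qed
  have E1': "\<forall>x. - divg (\<lambda>y. A y *v grad (\<lambda>z. a z * exp (b z)) y) x - q x \<bullet> grad (\<lambda>z. a z * exp (b z)) x
              - \<mu> x * (a x * exp (b x)) = k * (a x * exp (b x))"
    using E1 unfolding \<phi>eq .
  have E2': "\<forall>x. - divg (\<lambda>y. A y *v grad (\<lambda>z. a z * exp (- b z)) y) x + q x \<bullet> grad (\<lambda>z. a z * exp (- b z)) x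
              - (\<mu> x - divg q x) * (a x * exp (- b x)) = k * (a x * exp (- b x))"
    using E2 unfolding \<psi>eq .
  have F: "(- divg (\<lambda>y. A y *v grad a y) x
              - (\<mu> x - divg q x / 2 + grad b x \<bullet> (A x *v grad b x) + q x \<bullet> grad b x) * a x = k * a x)
        \<and> (- divg (\<lambda>y. (a y)\<^sup>2 *\<^sub>R (A y *v grad b y + (1/2) *\<^sub>R q y)) x = 0)" for x
    using pt[OF Ca Cb apos A_sym A_C1 q_C1, of x \<mu> k] E1' E2' by blast
  have pera: "periodicf eps L a" using per\<phi> per\<psi> unfolding a_def periodicf_def by simp
  have perb: "periodicf eps L b" using per\<phi> per\<psi> unfolding b_def periodicf_def by simp
  have P: "C2 a \<and> C2 b
          \<and> (\<forall>x. - divg (\<lambda>y. A y *v grad a y) x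
                  - (\<mu> x - divg q x / 2 + grad b x \<bullet> (A x *v grad b x) + q x \<bullet> grad b x) * a x
                 = k * a x)
          \<and> (\<forall>x. - divg (\<lambda>y. (a y)\<^sup>2 *\<^sub>R (A y *v grad b y + (1/2) *\<^sub>R q y)) x = 0)
          \<and> (\<forall>x. a x > 0) \<and> periodicf eps L a \<and> periodicf eps L b"
    using Ca Cb F apos pera perb by blast
  show "let \<alpha> = (\<lambda>x. sqrt (\<phi> x * \<psi> x)); \<beta> = (\<lambda>x. ln (\<phi> x / \<psi> x) / 2) in
            C2 \<alpha> \<and> C2 \<beta>
          \<and> (\<forall>x. - divg (\<lambda>y. A y *v grad \<alpha> y) x
                  - (\<mu> x - divg q x / 2 + grad \<beta> x \<bullet> (A x *v grad \<beta> x) + q x \<bullet> grad \<beta> x) * \<alpha> x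
                 = k * \<alpha> x)
          \<and> (\<forall>x. - divg (\<lambda>y. (\<alpha> y)\<^sup>2 *\<^sub>R (A y *v grad \<beta> y + (1/2) *\<^sub>R q y)) x = 0)
          \<and> (\<forall>x. \<alpha> x > 0) \<and> periodicf eps L \<alpha> \<and> periodicf eps L \<beta>"
    using P unfolding a_def b_def Let_def .
next
  fix \<alpha> \<beta> :: "real^'n \<Rightarrow> real"
  assume H: "C2 \<alpha> \<and> C2 \<beta> \<and> (\<forall>x. \<alpha> x > 0) \<and> periodicf eps L \<alpha> \<and> periodicf eps L \<beta>
          \<and> (\<forall>x. - divg (\<lambda>y. A y *v grad \<alpha> y) x
                  - (\<mu> x - divg q x / 2 + grad \<beta> x \<bullet> (A x *v grad \<beta> x) + q x \<bullet> grad \<beta> x) * \<alpha> x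
                 = k * \<alpha> x)
          \<and> (\<forall>x. - divg (\<lambda>y. (\<alpha> y)\<^sup>2 *\<^sub>R (A y *v grad \<beta> y + (1/2) *\<^sub>R q y)) x = 0)"
  then have Ca: "C2 \<alpha>" and Cb: "C2 \<beta>" and apos: "\<And>x. \<alpha> x > 0"
    and pera: "periodicf eps L \<alpha>" and perb: "periodicf eps L \<beta>" by auto
  have E: "(- divg (\<lambda>y. A y *v grad (\<lambda>z. \<alpha> z * exp (\<beta> z)) y) x - q x \<bullet> grad (\<lambda>z. \<alpha> z * exp (\<beta> z)) x
              - \<mu> x * (\<alpha> x * exp (\<beta> x)) = k * (\<alpha> x * exp (\<beta> x)))
        \<and> (- divg (\<lambda>y. A y *v grad (\<lambda>z. \<alpha> z * exp (- \<beta> z)) y) x + q x \<bullet> grad (\<lambda>z. \<alpha> z * exp (- \<beta> z)) x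
              - (\<mu> x - divg q x) * (\<alpha> x * exp (- \<beta> x)) = k * (\<alpha> x * exp (- \<beta> x)))" for x
    using pt[OF Ca Cb apos A_sym A_C1 q_C1, of x \<mu> k] H by blast
  have C1': "C2 (\<lambda>x. \<alpha> x * exp (\<beta> x))" by (intro C2_mult C2_exp Ca Cb)
  have C2': "C2 (\<lambda>x. \<alpha> x * exp (- \<beta> x))" by (intro C2_mult C2_exp C2_neg Ca Cb)
  have per1: "periodicf eps L (\<lambda>x. \<alpha> x * exp (\<beta> x))" using pera perb unfolding periodicf_def by simp
  have per2: "periodicf eps L (\<lambda>x. \<alpha> x * exp (- \<beta> x))" using pera perb unfolding periodicf_def by simp
  show "let \<phi> = (\<lambda>x. \<alpha> x * exp (\<beta> x)); \<psi> = (\<lambda>x. \<alpha> x * exp (- \<beta> x)) in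
            C2 \<phi> \<and> C2 \<psi> \<and> (\<forall>x. \<phi> x > 0) \<and> (\<forall>x. \<psi> x > 0)
          \<and> periodicf eps L \<phi> \<and> periodicf eps L \<psi>
          \<and> (\<forall>x. - divg (\<lambda>y. A y *v grad \<phi> y) x - q x \<bullet> grad \<phi> x - \<mu> x * \<phi> x = k * \<phi> x)
          \<and> (\<forall>x. - divg (\<lambda>y. A y *v grad \<psi> y) x + q x \<bullet> grad \<psi> x - (\<mu> x - divg q x) * \<psi> x = k * \<psi> x)"
    unfolding Let_def using C1' C2' per1 per2 E apos by simp
qed

end
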